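(* Let $\varphi=\sum_{n=-\infty}^{\infty}\varphi_nz^n\in L^\infty(\mathbb{T})$, and let $C$ be a conjugation on $H^2(\mathbb{D})$ and $\{f_n\}_{n\in\mathbb{Z}_+}$ an orthonormal basis of $H^2(\mathbb{D})$ with $Cf_n=f_n$ for all $n$. Set \[ c_{n,m}:=\sum_{k=0}^\infty\langle f_k,z^n\rangle\langle f_k,z^m\rangle\qquad(m,n\in\mathbb{Z}_+). \] Then $T_\varphi$ is $C$-symmetric if and only if \[ \sum_{n=0}^{\infty}\overline{\varphi_{n-k}}\,c_{n,j}=\sum_{n=1}^{\infty}\overline{\varphi_n}\,c_{k,n+j}+\sum_{l=0}^{j}\overline{\varphi_{-l}}\,c_{k,j-l} \] for all $j,k\in\mathbb{Z}_+$.
   Context: A conjugation on a Hilbert space is an anti-linear, involutive ($C^2=I$), isometric map; a bounded operator $T$ is $C$-symmetric if $CT^*C=T$. $H^2(\mathbb{D})$ is the Hardy space of the unit disc, viewed as the closed subspace of $L^2(\mathbb{T})$ of functions with vanishing negative Fourier coefficients, with orthonormal basis $\{z^n\}_{n\in\mathbb{Z}_+}$; inner products are linear in the first entry. For $\varphi\in L^\infty(\mathbb{T})$, $T_\varphi f=P_{H^2(\mathbb{D})}(\varphi f)$. *)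

theory Defs
  imports "HOL-Analysis.Analysis"
begin

text \<open>Model of the Hardy space: H^2(D) is identified (unitarily, via Fourier coefficients)
  with square-summable sequences indexed by Z_+; the basis vector z^n is the n-th unit
  sequence. Inner product is linear in the first entry.\<close>

definition H2 :: "(nat \<Rightarrow> complex) set" where
  "H2 = {a. summable (\<lambda>n. (cmod (a n))\<^sup>2)}"

definition hinner :: "(nat \<Rightarrow> complex) \<Rightarrow> (nat \<Rightarrow> complex) \<Rightarrow> complex" where
  "hinner a b = (\<Sum>n. a n * cnj (b n))"

definition hnorm :: "(nat \<Rightarrow> complex) \<Rightarrow> real" where
  "hnorm a = sqrt (\<Sum>n. (cmod (a n))\<^sup>2)"

definition zpow :: "nat \<Rightarrow> (nat \<Rightarrow> complex)" where
  "zpow n = (\<lambda>k. if k = n then 1 else 0)"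

text \<open>Functions on the unit circle are parametrised by t in [0, 2 pi].\<close>

definition Linf_circle :: "(real \<Rightarrow> complex) \<Rightarrow> bool" where
  "Linf_circle \<phi> \<longleftrightarrow> set_borel_measurable lborel {0..2*pi} \<phi> \<and>
     (\<exists>B. AE t in lborel. t \<in> {0..2*pi} \<longrightarrow> cmod (\<phi> t) \<le> B)"

definition fourier_coeff :: "(real \<Rightarrow> complex) \<Rightarrow> int \<Rightarrow> complex" where
  "fourier_coeff \<phi> n =
     (LINT t:{0..2*pi}|lborel. \<phi> t * cis (- (real_of_int n * t))) / complex_of_real (2*pi)"

text \<open>Toeplitz operator T_phi f = P(phi f), written in the basis z^n:
  the n-th Fourier coefficient of phi f is sum_m phi_(n-m) f_m.\<close>

definition toeplitz :: "(real \<Rightarrow> complex) \<Rightarrow> (nat \<Rightarrow> complex) \<Rightarrow> (nat \<Rightarrow> complex)" where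
  "toeplitz \<phi> a = (\<lambda>n. \<Sum>m. fourier_coeff \<phi> (int n - int m) * a m)"

definition conjugation :: "((nat \<Rightarrow> complex) \<Rightarrow> (nat \<Rightarrow> complex)) \<Rightarrow> bool" where
  "conjugation C \<longleftrightarrow> (\<forall>a\<in>H2. C a \<in> H2) \<and>
     (\<forall>a\<in>H2. \<forall>b\<in>H2. C (\<lambda>n. a n + b n) = (\<lambda>n. C a n + C b n)) \<and>
     (\<forall>a\<in>H2. \<forall>c. C (\<lambda>n. c * a n) = (\<lambda>n. cnj c * C a n)) \<and>
     (\<forall>a\<in>H2. C (C a) = a) \<and>
     (\<forall>a\<in>H2. hnorm (C a) = hnorm a)"

definition orthonormal_basis :: "(nat \<Rightarrow> (nat \<Rightarrow> complex)) \<Rightarrow> bool" where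
  "orthonormal_basis f \<longleftrightarrow> (\<forall>k. f k \<in> H2) \<and>
     (\<forall>i j. hinner (f i) (f j) = (if i = j then 1 else 0)) \<and>
     (\<forall>a\<in>H2. (\<forall>k. hinner a (f k) = 0) \<longrightarrow> a = (\<lambda>_. 0))"

definition hadjoint :: "((nat \<Rightarrow> complex) \<Rightarrow> (nat \<Rightarrow> complex)) \<Rightarrow> (nat \<Rightarrow> complex) \<Rightarrow> (nat \<Rightarrow> complex)" where
  "hadjoint T b = (if b \<in> H2 then (THE c. c \<in> H2 \<and> (\<forall>a\<in>H2. hinner (T a) b = hinner a c))
                   else (\<lambda>_. 0))"

definition C_symmetric ::
  "((nat \<Rightarrow> complex) \<Rightarrow> (nat \<Rightarrow> complex)) \<Rightarrow> ((nat \<Rightarrow> complex) \<Rightarrow> (nat \<Rightarrow> complex)) \<Rightarrow> bool" where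
  "C_symmetric C T \<longleftrightarrow> (\<forall>a\<in>H2. C (hadjoint T (C a)) = T a)"

definition cnm :: "(nat \<Rightarrow> (nat \<Rightarrow> complex)) \<Rightarrow> nat \<Rightarrow> nat \<Rightarrow> complex" where
  "cnm f n m = (\<Sum>k. hinner (f k) (zpow n) * hinner (f k) (zpow m))"

end

theory Submission
  imports Defs
begin

lemma cis_int_integral:
  fixes j :: int
  shows "(LINT t:{0..2*pi}|lborel. cis (real_of_int j * t)) = (if j = 0 then complex_of_real (2*pi) else 0)"
proof (cases "j = 0")
  case True
  have "(LBINT t=ereal 0..ereal (2*pi). (1::complex)) = complex_of_real (2*pi) - complex_of_real 0"
    by (rule interval_integral_FTC_finite[where F=complex_of_real]) (auto intro!: derivative_eq_intros continuous_intros)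
  then show ?thesis using True by (simp add: interval_integral_Icc)
next
  case False
  have "(LBINT t=ereal 0..ereal (2*pi). cis (real_of_int j * t)) = cis (real_of_int j * (2*pi)) / (\<i> * of_int j) - cis (real_of_int j * 0) / (\<i> * of_int j)"
  proof (rule interval_integral_FTC_finite[where F="\<lambda>t. cis (real_of_int j * t) / (\<i> * of_int j)"])
    show "continuous_on {min 0 (2 * pi)..max 0 (2 * pi)} (\<lambda>t. cis (real_of_int j * t))"
      by (intro continuous_intros)
    fix x :: real
    have e: "\<And>t. cis (real_of_int j * t) = (\<lambda>z. exp (\<i> * of_int j * z)) (complex_of_real t)"
      by (simp add: cis_conv_exp mult.assoc)
    have "((\<lambda>z. exp (\<i> * of_int j * z) / (\<i> * of_int j)) has_field_derivative
           exp (\<i> * of_int j * complex_of_real x)) (at (complex_of_real x))"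
      using False
      by (auto intro!: derivative_eq_intros)
    from has_vector_derivative_real_field[OF this]
    show "((\<lambda>t. cis (real_of_int j * t) / (\<i> * of_int j)) has_vector_derivative cis (real_of_int j * x)) (at x within {min 0 (2 * pi)..max 0 (2 * pi)})"
      by (simp only: e)
  qed
  moreover have "cis (real_of_int j * (2*pi)) = 1"
    by (metis cis_multiple_2pi Ints_of_int mult.commute) 
  ultimately show ?thesis using False by (simp add: interval_integral_Icc)
qed

lemma integrable_ind_bounded:
  fixes g :: "real \<Rightarrow> 'a::{banach, second_countable_topology}"
  assumes "g \<in> borel_measurable lborel" "\<And>t. norm (g t) \<le> G"
  shows "integrable lborel (\<lambda>t. indicator {0..2*pi} t *\<^sub>R g t)"
proof (rule Bochner_Integration.integrable_bound)
  show "integrable lborel (\<lambda>t. indicator {0..2*pi} t * G)"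
    by (intro integrable_mult_left integrable_real_indicator) auto
  show "(\<lambda>t. indicator {0..2*pi} t *\<^sub>R g t) \<in> borel_measurable lborel"
    using assms(1) by measurable
  show "AE x in lborel. norm (indicator {0..2*pi} x *\<^sub>R g x) \<le> norm (indicator {0..2*pi} x * G)"
    using assms(2) by (auto simp: indicator_def intro!: AE_I2 order_trans[OF _ abs_ge_self])
qed

lemma integrable_ind_phi:
  fixes g :: "real \<Rightarrow> complex"
  assumes "Linf_circle \<phi>" "g \<in> borel_measurable lborel" "\<And>t. norm (g t) \<le> G"
  shows "integrable lborel (\<lambda>t. indicator {0..2*pi} t *\<^sub>R (\<phi> t * g t))"
proof -
  obtain B where mb: "(\<lambda>x. indicator {0..2*pi} x *\<^sub>R \<phi> x) \<in> borel_measurable lborel"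
    and B: "AE t in lborel. t \<in> {0..2*pi} \<longrightarrow> cmod (\<phi> t) \<le> B"
    using assms(1) unfolding Linf_circle_def set_borel_measurable_def by blast
  show ?thesis
  proof (rule Bochner_Integration.integrable_bound)
    show "integrable lborel (\<lambda>t. indicator {0..2*pi} t * (B * G))"
      by (intro integrable_mult_left integrable_real_indicator) auto
    have "(\<lambda>t. (indicator {0..2*pi} t *\<^sub>R \<phi> t) * g t) \<in> borel_measurable lborel"
      using mb assms(2) by measurable
    then show "(\<lambda>t. indicator {0..2*pi} t *\<^sub>R (\<phi> t * g t)) \<in> borel_measurable lborel"
      by (simp add: scaleR_conv_of_real mult.assoc)
    show "AE x in lborel. norm (indicator {0..2*pi} x *\<^sub>R (\<phi> x * g x)) \<le> norm (indicator {0..2*pi} x * (B * G))"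
      using B
    proof (rule eventually_mono)
      fix x assume h: "x \<in> {0..2*pi} \<longrightarrow> cmod (\<phi> x) \<le> B"
      show "norm (indicator {0..2*pi} x *\<^sub>R (\<phi> x * g x)) \<le> norm (indicator {0..2*pi} x * (B * G))"
      proof (cases "x \<in> {0..2*pi}")
        case True
        have "cmod (\<phi> x * g x) \<le> B * G"
          using h True assms(3)[of x] by (simp add: norm_mult mult_mono')
        then show ?thesis using True by simp
      qed simp
    qed
  qed
qed

lemma form_pointwise:
  "(\<Sum>m<L. a m * cis (real m * t)) * cnj (\<Sum>n<N. b n * cis (real n * t)) =
   (\<Sum>n<N. \<Sum>m<L. cis (-(real_of_int (int n - int m) * t)) * (a m * cnj (b n)))"
proof -
  have "(\<Sum>m<L. a m * cis (real m * t)) * cnj (\<Sum>n<N. b n * cis (real n * t)) =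
        (\<Sum>m<L. a m * cis (real m * t)) * (\<Sum>n<N. cnj (b n) * cis (-(real n * t)))"
    by (simp add: cis_cnj)
  also have "\<dots> = (\<Sum>m<L. \<Sum>n<N. (a m * cis (real m * t)) * (cnj (b n) * cis (-(real n * t))))"
    by (rule sum_product)
  also have "\<dots> = (\<Sum>n<N. \<Sum>m<L. (a m * cis (real m * t)) * (cnj (b n) * cis (-(real n * t))))"
    by (rule sum.swap)
  also have "\<dots> = (\<Sum>n<N. \<Sum>m<L. cis (-(real_of_int (int n - int m) * t)) * (a m * cnj (b n)))"
  proof (intro sum.cong refl)
    fix n m
    have e: "real m * t + -(real n * t) = -(real_of_int (int n - int m) * t)"
      by (simp add: algebra_simps)
    have "cis (real m * t) * cis (-(real n * t)) = cis (-(real_of_int (int n - int m) * t))"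
      by (simp only: cis_mult e)
    moreover have "(a m * cis (real m * t)) * (cnj (b n) * cis (-(real n * t))) = (cis (real m * t) * cis (-(real n * t))) * (a m * cnj (b n))"
      by (simp only: mult_ac)
    ultimately show "(a m * cis (real m * t)) * (cnj (b n) * cis (-(real n * t))) = cis (-(real_of_int (int n - int m) * t)) * (a m * cnj (b n))"
      by simp
  qed
  finally show ?thesis .
qed

lemma form_integral:
  fixes \<psi> :: "real \<Rightarrow> complex"
  assumes int: "\<And>k::int. integrable lborel (\<lambda>t. indicator {0..2*pi} t *\<^sub>R (\<psi> t * cis (-(real_of_int k * t))))"
  shows "integral\<^sup>L lborel (\<lambda>t. indicator {0..2*pi} t *\<^sub>R (\<psi> t * ((\<Sum>m<L. a m * cis (real m * t)) * cnj (\<Sum>n<N. b n * cis (real n * t)))))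
    = (\<Sum>n<N. \<Sum>m<L. integral\<^sup>L lborel (\<lambda>t. indicator {0..2*pi} t *\<^sub>R (\<psi> t * cis (-(real_of_int (int n - int m) * t)))) * (a m * cnj (b n)))"
proof -
  have "integral\<^sup>L lborel (\<lambda>t. indicator {0..2*pi} t *\<^sub>R (\<psi> t * ((\<Sum>m<L. a m * cis (real m * t)) * cnj (\<Sum>n<N. b n * cis (real n * t)))))
     = integral\<^sup>L lborel (\<lambda>t. \<Sum>n<N. \<Sum>m<L. (indicator {0..2*pi} t *\<^sub>R (\<psi> t * cis (-(real_of_int (int n - int m) * t)))) * (a m * cnj (b n)))"
    by (rule Bochner_Integration.integral_cong[OF refl]) (simp only: form_pointwise scaleR_sum_right sum_distrib_left mult_scaleR_left mult.assoc)
  also have "\<dots> = (\<Sum>n<N. \<Sum>m<L. integral\<^sup>L lborel (\<lambda>t. indicator {0..2*pi} t *\<^sub>R (\<psi> t * cis (-(real_of_int (int n - int m) * t)))) * (a m * cnj (b n)))"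
  proof -
    define G where "G = (\<lambda>n m t. indicator {0..2*pi} t *\<^sub>R (\<psi> t * cis (-(real_of_int (int n - int m) * t))))"
    have iG: "\<And>n m. integrable lborel (\<lambda>t. G n m t * (a m * cnj (b n)))"
      unfolding G_def by (intro integrable_mult_left int)
    have "integral\<^sup>L lborel (\<lambda>t. \<Sum>n<N. \<Sum>m<L. G n m t * (a m * cnj (b n)))
       = (\<Sum>n<N. integral\<^sup>L lborel (\<lambda>t. \<Sum>m<L. G n m t * (a m * cnj (b n))))"
      by (rule Bochner_Integration.integral_sum, rule Bochner_Integration.integrable_sum, rule iG)
    also have "\<dots> = (\<Sum>n<N. \<Sum>m<L. integral\<^sup>L lborel (\<lambda>t. G n m t * (a m * cnj (b n))))"
      by (rule sum.cong[OF refl], rule Bochner_Integration.integral_sum, rule iG)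
    also have "\<dots> = (\<Sum>n<N. \<Sum>m<L. integral\<^sup>L lborel (G n m) * (a m * cnj (b n)))"
      by (rule sum.cong[OF refl], rule sum.cong[OF refl], rule integral_mult_left_zero)
    finally show ?thesis unfolding G_def .
  qed
  finally show ?thesis .
qed

lemma cis_ind_integral:
  "integral\<^sup>L lborel (\<lambda>t. indicator {0..2*pi} t *\<^sub>R (1 * cis (-(real_of_int k * t)))) = (if k = 0 then complex_of_real (2*pi) else 0)"
proof -
  have "\<And>t. -(real_of_int k * t) = real_of_int (-k) * t" by simp
  then show ?thesis using cis_int_integral[of "-k"] by (simp add: set_lebesgue_integral_def)
qed

lemma trigpoly_bound: "cmod (\<Sum>m<L. a m * cis (real m * t)) \<le> (\<Sum>m<L. cmod (a m))"
  by (rule order_trans[OF norm_sum]) (simp add: norm_mult)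

lemma sq_integral:
  "integral\<^sup>L lborel (\<lambda>t. indicator {0..2*pi} t * (cmod (\<Sum>m<L. a m * cis (real m * t)))\<^sup>2) = 2*pi * (\<Sum>m<L. (cmod (a m))\<^sup>2)"
proof -
  define A where "A = (\<lambda>t. \<Sum>m<L. a m * cis (real m * t))"
  have intc: "\<And>k::int. integrable lborel (\<lambda>t. indicator {0..2*pi} t *\<^sub>R (1 * cis (-(real_of_int k * t))))"
    by (rule integrable_ind_bounded[where G=1]) (auto intro!: borel_measurable_continuous_onI continuous_intros)
  have "complex_of_real (integral\<^sup>L lborel (\<lambda>t. indicator {0..2*pi} t * (cmod (A t))\<^sup>2))
      = integral\<^sup>L lborel (\<lambda>t. complex_of_real (indicator {0..2*pi} t * (cmod (A t))\<^sup>2))"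
    by (rule integral_complex_of_real[symmetric])
  also have "\<dots> = integral\<^sup>L lborel (\<lambda>t. indicator {0..2*pi} t *\<^sub>R (1 * (A t * cnj (A t))))"
    by (rule Bochner_Integration.integral_cong[OF refl]) (simp add: complex_norm_square[symmetric] scaleR_conv_of_real)
  also have "\<dots> = (\<Sum>n<L. \<Sum>m<L. integral\<^sup>L lborel (\<lambda>t. indicator {0..2*pi} t *\<^sub>R (1 * cis (-(real_of_int (int n - int m) * t)))) * (a m * cnj (a n)))"
    unfolding A_def by (rule form_integral[OF intc])
  also have "\<dots> = (\<Sum>n<L. \<Sum>m<L. (if n = m then complex_of_real (2*pi) * (a m * cnj (a n)) else 0))"
    by (intro sum.cong refl) (simp only: cis_ind_integral, auto)
  also have "\<dots> = (\<Sum>n<L. complex_of_real (2*pi) * (a n * cnj (a n)))"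
    by (simp add: sum.delta)
  also have "\<dots> = complex_of_real (2*pi * (\<Sum>m<L. (cmod (a m))\<^sup>2))"
    by (simp add: complex_norm_square[symmetric] sum_distrib_left)
  finally show ?thesis unfolding A_def of_real_eq_iff .
qed

lemma phi_form_weak:
  assumes L: "Linf_circle \<phi>"
  obtains K where "K \<ge> 0" "\<And>N L a b. cmod (\<Sum>n<N. \<Sum>m<L. fourier_coeff \<phi> (int n - int m) * a m * cnj (b n))
     \<le> K / 2 * ((\<Sum>m<L. (cmod (a m))\<^sup>2) + (\<Sum>n<N. (cmod (b n))\<^sup>2))"
proof -
  obtain B where B: "AE t in lborel. t \<in> {0..2*pi} \<longrightarrow> cmod (\<phi> t) \<le> B"
    using L unfolding Linf_circle_def by blast
  define K where "K = max B 0"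
  have K0: "K \<ge> 0" unfolding K_def by simp
  have main: "cmod (\<Sum>n<N. \<Sum>m<L. fourier_coeff \<phi> (int n - int m) * a m * cnj (b n))
     \<le> K / 2 * ((\<Sum>m<L. (cmod (a m))\<^sup>2) + (\<Sum>n<N. (cmod (b n))\<^sup>2))" for N L a b
  proof -
    define A where "A = (\<lambda>t. \<Sum>m<L. a m * cis (real m * t))"
    define Bf where "Bf = (\<lambda>t. \<Sum>n<N. b n * cis (real n * t))"
    have mA: "A \<in> borel_measurable borel" unfolding A_def
      by (auto intro!: borel_measurable_continuous_onI continuous_intros)
    have mB: "Bf \<in> borel_measurable borel" unfolding Bf_def
      by (auto intro!: borel_measurable_continuous_onI continuous_intros)
    have bA: "\<And>t. cmod (A t) \<le> (\<Sum>m<L. cmod (a m))" unfolding A_def by (rule trigpoly_bound)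
    have bB: "\<And>t. cmod (Bf t) \<le> (\<Sum>n<N. cmod (b n))" unfolding Bf_def by (rule trigpoly_bound)
    have intk: "\<And>k::int. integrable lborel (\<lambda>t. indicator {0..2*pi} t *\<^sub>R (\<phi> t * cis (-(real_of_int k * t))))"
      by (rule integrable_ind_phi[OF L, where G=1]) (auto intro!: borel_measurable_continuous_onI continuous_intros)
    have fc: "fourier_coeff \<phi> k = integral\<^sup>L lborel (\<lambda>t. indicator {0..2*pi} t *\<^sub>R (\<phi> t * cis (-(real_of_int k * t)))) / complex_of_real (2*pi)" for k
      unfolding fourier_coeff_def set_lebesgue_integral_def by simp
    have "(\<Sum>n<N. \<Sum>m<L. fourier_coeff \<phi> (int n - int m) * a m * cnj (b n))
        = (\<Sum>n<N. \<Sum>m<L. integral\<^sup>L lborel (\<lambda>t. indicator {0..2*pi} t *\<^sub>R (\<phi> t * cis (-(real_of_int (int n - int m) * t)))) * (a m * cnj (b n))) / complex_of_real (2*pi)"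
      by (simp add: fc sum_divide_distrib mult.assoc)
    also have "\<dots> = integral\<^sup>L lborel (\<lambda>t. indicator {0..2*pi} t *\<^sub>R (\<phi> t * (A t * cnj (Bf t)))) / complex_of_real (2*pi)"
      unfolding A_def Bf_def by (simp only: form_integral[OF intk])
    finally have eq: "(\<Sum>n<N. \<Sum>m<L. fourier_coeff \<phi> (int n - int m) * a m * cnj (b n))
        = integral\<^sup>L lborel (\<lambda>t. indicator {0..2*pi} t *\<^sub>R (\<phi> t * (A t * cnj (Bf t)))) / complex_of_real (2*pi)" .
    define R where "R = (\<lambda>t. K / 2 * (indicator {0..2*pi} t * (cmod (A t))\<^sup>2 + indicator {0..2*pi} t * (cmod (Bf t))\<^sup>2))"
    have iA: "integrable lborel (\<lambda>t. indicator {0..2*pi} t * (cmod (A t))\<^sup>2)"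
      using integrable_ind_bounded[of "\<lambda>t. (cmod (A t))\<^sup>2" "((\<Sum>m<L. cmod (a m)))\<^sup>2"] mA bA
      by (simp add: power_mono)
    have iB: "integrable lborel (\<lambda>t. indicator {0..2*pi} t * (cmod (Bf t))\<^sup>2)"
      using integrable_ind_bounded[of "\<lambda>t. (cmod (Bf t))\<^sup>2" "((\<Sum>n<N. cmod (b n)))\<^sup>2"] mB bB
      by (simp add: power_mono)
    have intR: "integrable lborel R"
      unfolding R_def using iA iB by simp
    have "cmod (integral\<^sup>L lborel (\<lambda>t. indicator {0..2*pi} t *\<^sub>R (\<phi> t * (A t * cnj (Bf t)))))
        \<le> integral\<^sup>L lborel (\<lambda>t. norm (indicator {0..2*pi} t *\<^sub>R (\<phi> t * (A t * cnj (Bf t)))))"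
      by (rule integral_norm_bound)
    also have "\<dots> \<le> integral\<^sup>L lborel R"
    proof (rule integral_mono_AE'[OF intR])
      show "AE x in lborel. norm (indicator {0..2*pi} x *\<^sub>R (\<phi> x * (A x * cnj (Bf x)))) \<le> R x"
        using B
      proof (rule eventually_mono)
        fix x assume h: "x \<in> {0..2*pi} \<longrightarrow> cmod (\<phi> x) \<le> B"
        show "norm (indicator {0..2*pi} x *\<^sub>R (\<phi> x * (A x * cnj (Bf x)))) \<le> R x"
        proof (cases "x \<in> {0..2*pi}")
          case True
          have p: "cmod (\<phi> x) \<le> K" using h True unfolding K_def by auto
          have q: "cmod (A x) * cmod (Bf x) \<le> ((cmod (A x))\<^sup>2 + (cmod (Bf x))\<^sup>2) / 2"
            using sum_squares_bound[of "cmod (A x)" "cmod (Bf x)"] by (simp add: field_simps)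
          have "cmod (\<phi> x * (A x * cnj (Bf x))) = cmod (\<phi> x) * (cmod (A x) * cmod (Bf x))"
            by (simp add: norm_mult)
          also have "\<dots> \<le> K * (((cmod (A x))\<^sup>2 + (cmod (Bf x))\<^sup>2) / 2)"
            by (rule mult_mono[OF p q]) (auto simp: K0)
          also have "\<dots> = R x" using True unfolding R_def by simp
          finally show ?thesis using True by simp
        qed (simp add: R_def)
      qed
      show "AE x in lborel. 0 \<le> R x" unfolding R_def using K0 by (auto intro!: AE_I2)
    qed
    also have "integral\<^sup>L lborel R = K / 2 * (2*pi * (\<Sum>m<L. (cmod (a m))\<^sup>2) + 2*pi * (\<Sum>n<N. (cmod (b n))\<^sup>2))"
    proof -
      have "integral\<^sup>L lborel R = K / 2 * (integral\<^sup>L lborel (\<lambda>t. indicator {0..2*pi} t * (cmod (A t))\<^sup>2) + integral\<^sup>L lborel (\<lambda>t. indicator {0..2*pi} t * (cmod (Bf t))\<^sup>2))"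
        unfolding R_def using iA iB by simp
      then show ?thesis unfolding A_def Bf_def sq_integral .
    qed
    finally have "cmod (integral\<^sup>L lborel (\<lambda>t. indicator {0..2*pi} t *\<^sub>R (\<phi> t * (A t * cnj (Bf t))))) \<le> 2 * pi * (K / 2 * ((\<Sum>m<L. (cmod (a m))\<^sup>2) + (\<Sum>n<N. (cmod (b n))\<^sup>2)))"
      by (simp add: algebra_simps)
    moreover have "cmod (integral\<^sup>L lborel (\<lambda>t. indicator {0..2*pi} t *\<^sub>R (\<phi> t * (A t * cnj (Bf t)))) / complex_of_real (2*pi))
       = cmod (integral\<^sup>L lborel (\<lambda>t. indicator {0..2*pi} t *\<^sub>R (\<phi> t * (A t * cnj (Bf t))))) / (2*pi)"
      by (simp add: norm_divide)
    ultimately show ?thesis unfolding eq by (simp add: pos_divide_le_eq pi_gt_zero mult.commute)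
  qed
  show ?thesis using that K0 main by blast
qed

lemma scale_lemma:
  fixes x K \<alpha> \<beta> :: real
  assumes h: "\<And>u. u > 0 \<Longrightarrow> x \<le> K / 2 * (u * \<alpha> + \<beta> / u)"
    and K: "K \<ge> 0" and a: "\<alpha> \<ge> 0" and b: "\<beta> \<ge> 0"
  shows "x \<le> K * sqrt \<alpha> * sqrt \<beta>"
proof (cases "\<alpha> > 0 \<and> \<beta> > 0")
  case True
  define u where "u = sqrt \<beta> / sqrt \<alpha>"
  have u: "u > 0" using True unfolding u_def by simp
  have sa: "sqrt \<alpha> > 0" "sqrt \<beta> > 0" using True by auto
  have ea: "\<alpha> = sqrt \<alpha> * sqrt \<alpha>" using a by simp
  have eb: "\<beta> = sqrt \<beta> * sqrt \<beta>" using b by simp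
  have "u * \<alpha> = sqrt \<alpha> * sqrt \<beta>"
    unfolding u_def using sa by (subst ea) (simp add: field_simps)
  moreover have "\<beta> / u = sqrt \<alpha> * sqrt \<beta>"
    unfolding u_def using sa by (subst eb) (simp add: field_simps)
  ultimately show ?thesis using h[OF u] by simp
next
  case False
  show ?thesis
  proof (rule ccontr)
    assume c: "\<not> ?thesis"
    then have x0: "x > 0" using False a b K by auto
    show False
    proof (cases "\<alpha> = 0")
      case True
      define u where "u = (K * \<beta> + 1) / x"
      have u: "u > 0" using x0 K b unfolding u_def by (simp add: add_nonneg_pos)
      have "x \<le> K / 2 * (\<beta> / u)" using h[OF u] True by simp
      also have "\<dots> = K * \<beta> * x / (2 * (K * \<beta> + 1))" unfolding u_def using x0 by (simp add: field_simps)
      also have "\<dots> < x"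
      proof -
        have "0 \<le> K * \<beta>" using K b by simp
        then have "K * \<beta> < 2 * (K * \<beta> + 1)" by (simp add: algebra_simps)
        from mult_strict_right_mono[OF this x0]
        have "K * \<beta> * x < 2 * (K * \<beta> + 1) * x" .
        then show ?thesis using K b by (simp add: divide_less_eq add_nonneg_pos mult.commute)
      qed
      finally show False by simp
    next
      case False
      then have b0: "\<beta> = 0" using \<open>\<not> (\<alpha> > 0 \<and> \<beta> > 0)\<close> a b by auto
      define u where "u = x / (K * \<alpha> + 1)"
      have u: "u > 0" using x0 K a unfolding u_def by (simp add: add_nonneg_pos)
      have "x \<le> K / 2 * (u * \<alpha>)" using h[OF u] b0 by simp
      also have "\<dots> = K * \<alpha> * x / (2 * (K * \<alpha> + 1))" unfolding u_def using x0 K a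
        by (simp add: field_simps add_nonneg_pos)
      also have "\<dots> < x"
      proof -
        have "0 \<le> K * \<alpha>" using K a by simp
        then have "K * \<alpha> < 2 * (K * \<alpha> + 1)" by (simp add: algebra_simps)
        from mult_strict_right_mono[OF this x0]
        have "K * \<alpha> * x < 2 * (K * \<alpha> + 1) * x" .
        then show ?thesis using K a by (simp add: divide_less_eq add_nonneg_pos mult.commute)
      qed
      finally show False by simp
    qed
  qed
qed

lemma phi_form_bound:
  assumes L: "Linf_circle \<phi>"
  obtains K where "K \<ge> 0" "\<And>N L a b. cmod (\<Sum>n<N. \<Sum>m<L. fourier_coeff \<phi> (int n - int m) * a m * cnj (b n))
     \<le> K * sqrt (\<Sum>m<L. (cmod (a m))\<^sup>2) * sqrt (\<Sum>n<N. (cmod (b n))\<^sup>2)"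
proof -
  obtain K where K: "K \<ge> 0" and W: "\<And>N L a b. cmod (\<Sum>n<N. \<Sum>m<L. fourier_coeff \<phi> (int n - int m) * a m * cnj (b n))
     \<le> K / 2 * ((\<Sum>m<L. (cmod (a m))\<^sup>2) + (\<Sum>n<N. (cmod (b n))\<^sup>2))"
    using phi_form_weak[OF L] by blast
  have "cmod (\<Sum>n<N. \<Sum>m<L. fourier_coeff \<phi> (int n - int m) * a m * cnj (b n))
     \<le> K * sqrt (\<Sum>m<L. (cmod (a m))\<^sup>2) * sqrt (\<Sum>n<N. (cmod (b n))\<^sup>2)" for N L a b
  proof (rule scale_lemma[OF _ K])
    fix u :: real assume u: "u > 0"
    define s where "s = sqrt u"
    have s: "s > 0" "s * s = u" using u unfolding s_def by auto
    define a' where "a' = (\<lambda>m. complex_of_real s * a m)"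
    define b' where "b' = (\<lambda>n. complex_of_real (1 / s) * b n)"
    have "(\<Sum>n<N. \<Sum>m<L. fourier_coeff \<phi> (int n - int m) * a' m * cnj (b' n))
        = (\<Sum>n<N. \<Sum>m<L. fourier_coeff \<phi> (int n - int m) * a m * cnj (b n))"
    proof (intro sum.cong refl)
      fix n m
      have "complex_of_real s * complex_of_real (1 / s) = 1" using s by (simp flip: of_real_mult)
      moreover have "a' m * cnj (b' n) = (complex_of_real s * complex_of_real (1 / s)) * (a m * cnj (b n))"
        unfolding a'_def b'_def by (simp only: complex_cnj_mult complex_cnj_complex_of_real mult_ac)
      ultimately have "a' m * cnj (b' n) = a m * cnj (b n)" by simp
      then show "fourier_coeff \<phi> (int n - int m) * a' m * cnj (b' n) = fourier_coeff \<phi> (int n - int m) * a m * cnj (b n)"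
        by (simp only: mult.assoc)
    qed
    moreover have "cmod (\<Sum>n<N. \<Sum>m<L. fourier_coeff \<phi> (int n - int m) * a' m * cnj (b' n))
     \<le> K / 2 * ((\<Sum>m<L. (cmod (a' m))\<^sup>2) + (\<Sum>n<N. (cmod (b' n))\<^sup>2))" by (rule W)
    moreover have "(\<Sum>m<L. (cmod (a' m))\<^sup>2) = u * (\<Sum>m<L. (cmod (a m))\<^sup>2)"
      unfolding a'_def using s(1) by (simp add: norm_mult power_mult_distrib sum_distrib_left power2_eq_square mult_ac flip: s(2))
    moreover have "(\<Sum>n<N. (cmod (b' n))\<^sup>2) = (\<Sum>n<N. (cmod (b n))\<^sup>2) / u"
      unfolding b'_def using s(1) by (simp add: norm_mult norm_divide power_mult_distrib sum_divide_distrib power2_eq_square flip: s(2))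
    ultimately show "cmod (\<Sum>n<N. \<Sum>m<L. fourier_coeff \<phi> (int n - int m) * a m * cnj (b n))
        \<le> K / 2 * (u * (\<Sum>m<L. (cmod (a m))\<^sup>2) + (\<Sum>n<N. (cmod (b n))\<^sup>2) / u)"
      by simp
  qed (auto intro: sum_nonneg)
  then show ?thesis using that K by blast
qed

definition nsq :: "(nat \<Rightarrow> complex) \<Rightarrow> real" where
  "nsq a = (\<Sum>n. (cmod (a n))\<^sup>2)"

lemma H2_iff: "a \<in> H2 \<longleftrightarrow> summable (\<lambda>n. (cmod (a n))\<^sup>2)"
  unfolding H2_def by simp

lemma nsq_nonneg: "a \<in> H2 \<Longrightarrow> nsq a \<ge> 0"
  unfolding nsq_def H2_iff by (rule suminf_nonneg) simp_all

lemma hnorm_nsq: "hnorm a = sqrt (nsq a)"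
  unfolding hnorm_def nsq_def by simp

lemma prod_summable_norm:
  assumes "summable (\<lambda>n. (cmod (x n))\<^sup>2)" "summable (\<lambda>n. (cmod (y n))\<^sup>2)"
  shows "summable (\<lambda>n. norm (x n * y n))"
proof (rule summable_comparison_test[OF _ summable_mult[OF summable_add[OF assms]]])
  show "\<exists>N. \<forall>n\<ge>N. norm (norm (x n * y n)) \<le> 1/2 * ((cmod (x n))\<^sup>2 + (cmod (y n))\<^sup>2)"
    using sum_squares_bound[of "cmod (x _)" "cmod (y _)"] by (auto simp: norm_mult field_simps)
qed

lemma prod_summable:
  assumes "summable (\<lambda>n. (cmod (x n))\<^sup>2)" "summable (\<lambda>n. (cmod (y n))\<^sup>2)"
  shows "summable (\<lambda>n. x n * y n)"
  using summable_norm_cancel[OF prod_summable_norm[OF assms]] .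

lemma hinner_summable:
  assumes "a \<in> H2" "b \<in> H2"
  shows "summable (\<lambda>n. a n * cnj (b n))"
  using assms by (intro prod_summable) (auto simp: H2_def)

lemma H2_add: "a \<in> H2 \<Longrightarrow> b \<in> H2 \<Longrightarrow> (\<lambda>n. a n + b n) \<in> H2"
proof -
  assume a: "a \<in> H2" and b: "b \<in> H2"
  have "summable (\<lambda>n. 2 * ((cmod (a n))\<^sup>2 + (cmod (b n))\<^sup>2))"
    using a b unfolding H2_def by (intro summable_mult summable_add) auto
  then show ?thesis unfolding H2_iff
  proof (rule summable_comparison_test[rotated], intro exI allI impI)
    fix n
    have "cmod (a n + b n) \<le> cmod (a n) + cmod (b n)" by (rule norm_triangle_ineq)
    then have "(cmod (a n + b n))\<^sup>2 \<le> (cmod (a n) + cmod (b n))\<^sup>2" by (simp add: power_mono)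
    also have "\<dots> \<le> 2 * ((cmod (a n))\<^sup>2 + (cmod (b n))\<^sup>2)"
      using sum_squares_bound[of "cmod (a n)" "cmod (b n)"] by (simp add: power2_sum)
    finally show "norm ((cmod (a n + b n))\<^sup>2) \<le> 2 * ((cmod (a n))\<^sup>2 + (cmod (b n))\<^sup>2)" by simp
  qed
qed

lemma H2_scale: "a \<in> H2 \<Longrightarrow> (\<lambda>n. c * a n) \<in> H2"
  unfolding H2_def by (simp add: norm_mult power_mult_distrib summable_mult)

lemma H2_minus: "a \<in> H2 \<Longrightarrow> (\<lambda>n. - a n) \<in> H2"
  unfolding H2_def by simp

lemma H2_diff: "a \<in> H2 \<Longrightarrow> b \<in> H2 \<Longrightarrow> (\<lambda>n. a n - b n) \<in> H2"
  using H2_add[OF _ H2_minus, of a b] by simp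

lemma H2_finite_support: "finite F \<Longrightarrow> (\<And>n. n \<notin> F \<Longrightarrow> a n = 0) \<Longrightarrow> a \<in> H2"
  unfolding H2_iff by (rule summable_finite[where N=F]) auto

lemma zpow_H2: "zpow k \<in> H2"
  by (rule H2_finite_support[of "{k}"]) (auto simp: zpow_def)

lemma hinner_zpow_right: "hinner x (zpow k) = x k"
  unfolding hinner_def by (subst suminf_finite[of "{k}"]) (auto simp: zpow_def)

lemma hinner_zpow_left: "hinner (zpow k) x = cnj (x k)"
  unfolding hinner_def by (subst suminf_finite[of "{k}"]) (auto simp: zpow_def)

lemma suminf_cnj: "summable f \<Longrightarrow> (\<Sum>n. cnj (f n)) = cnj (suminf f)"
  using sums_cnj[of f "suminf f"] by (simp add: sums_unique[symmetric] summable_sums)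

lemma hinner_cnj: "a \<in> H2 \<Longrightarrow> b \<in> H2 \<Longrightarrow> hinner b a = cnj (hinner a b)"
proof -
  assume "a \<in> H2" "b \<in> H2"
  note s = hinner_summable[OF this]
  have "cnj (hinner a b) = (\<Sum>n. cnj (a n * cnj (b n)))"
    unfolding hinner_def by (rule suminf_cnj[OF s, symmetric])
  then show ?thesis unfolding hinner_def by (simp add: mult.commute)
qed

lemma hinner_add_left: "a \<in> H2 \<Longrightarrow> b \<in> H2 \<Longrightarrow> c \<in> H2 \<Longrightarrow> hinner (\<lambda>n. a n + b n) c = hinner a c + hinner b c"
  unfolding hinner_def by (simp add: distrib_right suminf_add[OF hinner_summable hinner_summable])

lemma hinner_diff_left: "a \<in> H2 \<Longrightarrow> b \<in> H2 \<Longrightarrow> c \<in> H2 \<Longrightarrow> hinner (\<lambda>n. a n - b n) c = hinner a c - hinner b c"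
  unfolding hinner_def by (simp add: left_diff_distrib suminf_diff[OF hinner_summable hinner_summable])

lemma hinner_scale_left: "a \<in> H2 \<Longrightarrow> c \<in> H2 \<Longrightarrow> hinner (\<lambda>n. x * a n) c = x * hinner a c"
  unfolding hinner_def by (simp add: mult.assoc suminf_mult[OF hinner_summable])

lemma hinner_add_right: "a \<in> H2 \<Longrightarrow> b \<in> H2 \<Longrightarrow> c \<in> H2 \<Longrightarrow> hinner c (\<lambda>n. a n + b n) = hinner c a + hinner c b"
  unfolding hinner_def by (simp add: distrib_left suminf_add[OF hinner_summable hinner_summable])

lemma hinner_scale_right: "a \<in> H2 \<Longrightarrow> c \<in> H2 \<Longrightarrow> hinner c (\<lambda>n. x * a n) = cnj x * hinner c a"
  unfolding hinner_def by (simp add: mult.left_commute suminf_mult[OF hinner_summable])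

lemma hinner_self: "a \<in> H2 \<Longrightarrow> hinner a a = complex_of_real (nsq a)"
proof -
  assume a: "a \<in> H2"
  have "(\<lambda>n. complex_of_real ((cmod (a n))\<^sup>2)) sums complex_of_real (nsq a)"
    using a unfolding nsq_def H2_iff by (simp only: sums_of_real_iff summable_sums)
  moreover have "(\<lambda>n. complex_of_real ((cmod (a n))\<^sup>2)) = (\<lambda>n. a n * cnj (a n))"
    by (simp only: complex_norm_square)
  ultimately show ?thesis unfolding hinner_def by (simp add: sums_unique[symmetric])
qed

lemma hnorm_sq: "a \<in> H2 \<Longrightarrow> (hnorm a)\<^sup>2 = nsq a"
  by (simp add: hnorm_nsq nsq_nonneg)

lemma cauchy_schwarz:
  assumes a: "a \<in> H2" and b: "b \<in> H2"
  shows "cmod (hinner a b) \<le> hnorm a * hnorm b"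
proof -
  have sn: "summable (\<lambda>n. norm (a n * cnj (b n)))"
    using a b by (intro prod_summable_norm) (auto simp: H2_iff)
  have "cmod (hinner a b) \<le> (\<Sum>n. norm (a n * cnj (b n)))"
    unfolding hinner_def by (rule summable_norm[OF sn])
  also have "\<dots> \<le> hnorm a * hnorm b"
  proof (rule suminf_le_const[OF sn])
    fix N
    have "(\<Sum>n<N. norm (a n * cnj (b n))) = (\<Sum>n<N. \<bar>cmod (a n)\<bar> * \<bar>cmod (b n)\<bar>)"
      by (simp add: norm_mult)
    also have "\<dots> \<le> L2_set (\<lambda>n. cmod (a n)) {..<N} * L2_set (\<lambda>n. cmod (b n)) {..<N}"
      by (rule L2_set_mult_ineq)
    also have "\<dots> \<le> hnorm a * hnorm b"
    proof (rule mult_mono)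
      show "L2_set (\<lambda>n. cmod (a n)) {..<N} \<le> hnorm a"
        unfolding L2_set_def hnorm_def using a unfolding H2_iff
        by (intro real_sqrt_le_mono sum_le_suminf) auto
      show "L2_set (\<lambda>n. cmod (b n)) {..<N} \<le> hnorm b"
        unfolding L2_set_def hnorm_def using b unfolding H2_iff
        by (intro real_sqrt_le_mono sum_le_suminf) auto
    qed (use a in \<open>auto simp: hnorm_def L2_set_def H2_iff intro: sum_nonneg suminf_nonneg\<close>)
    finally show "(\<Sum>n<N. norm (a n * cnj (b n))) \<le> hnorm a * hnorm b" .
  qed
  finally show ?thesis .
qed

definition trunc :: "nat \<Rightarrow> (nat \<Rightarrow> complex) \<Rightarrow> (nat \<Rightarrow> complex)" where
  "trunc L a = (\<lambda>m. if m < L then a m else 0)"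

lemma trunc_H2: "trunc L a \<in> H2"
  by (rule H2_finite_support[of "{..<L}"]) (auto simp: trunc_def)

lemma tail_tendsto:
  assumes a: "a \<in> H2"
  shows "(\<lambda>L. nsq (\<lambda>n. a n - trunc L a n)) \<longlonglongrightarrow> 0"
proof -
  have s: "summable (\<lambda>n. (cmod (a n))\<^sup>2)" using a by (simp add: H2_iff)
  have "nsq (\<lambda>n. a n - trunc L a n) = (\<Sum>n. (cmod (a (n + L)))\<^sup>2)" for L
  proof -
    have s2: "summable (\<lambda>n. (cmod (a n - trunc L a n))\<^sup>2)"
      using H2_diff[OF a trunc_H2] by (simp add: H2_iff)
    have "nsq (\<lambda>n. a n - trunc L a n) = (\<Sum>n. (cmod (a (n + L) - trunc L a (n + L)))\<^sup>2) + (\<Sum>i<L. (cmod (a i - trunc L a i))\<^sup>2)"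
      unfolding nsq_def by (rule suminf_split_initial_segment[OF s2])
    then show ?thesis by (simp add: trunc_def)
  qed
  then show ?thesis using suminf_exist_split2[OF s] by simp
qed

definition kop :: "(nat \<Rightarrow> nat \<Rightarrow> complex) \<Rightarrow> (nat \<Rightarrow> complex) \<Rightarrow> (nat \<Rightarrow> complex)" where
  "kop M a = (\<lambda>n. \<Sum>m. M n m * a m)"

definition KB :: "(nat \<Rightarrow> nat \<Rightarrow> complex) \<Rightarrow> real \<Rightarrow> bool" where
  "KB M K \<longleftrightarrow> K \<ge> 0 \<and> (\<forall>N L a b. cmod (\<Sum>n<N. \<Sum>m<L. M n m * a m * cnj (b n))
     \<le> K * sqrt (\<Sum>m<L. (cmod (a m))\<^sup>2) * sqrt (\<Sum>n<N. (cmod (b n))\<^sup>2))"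

definition adjk :: "(nat \<Rightarrow> nat \<Rightarrow> complex) \<Rightarrow> (nat \<Rightarrow> nat \<Rightarrow> complex)" where
  "adjk M = (\<lambda>i j. cnj (M j i))"

lemma KB_apply:
  assumes "KB M K"
  shows "cmod (\<Sum>n<N. \<Sum>m<L. M n m * a m * cnj (b n)) \<le> K * sqrt (\<Sum>m<L. (cmod (a m))\<^sup>2) * sqrt (\<Sum>n<N. (cmod (b n))\<^sup>2)"
  using assms unfolding KB_def by blast

lemma KB_adjk:
  assumes "KB M K" shows "KB (adjk M) K"
  unfolding KB_def
proof (intro conjI allI)
  show "K \<ge> 0" using assms by (simp add: KB_def)
  fix N L a b
  have "(\<Sum>n<N. \<Sum>m<L. adjk M n m * a m * cnj (b n)) = cnj (\<Sum>n<N. \<Sum>m<L. M m n * b n * cnj (a m))"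
    by (simp add: adjk_def mult_ac)
  also have "\<dots> = cnj (\<Sum>m<L. \<Sum>n<N. M m n * b n * cnj (a m))"
    by (subst sum.swap) (rule refl)
  finally have "cmod (\<Sum>n<N. \<Sum>m<L. adjk M n m * a m * cnj (b n)) = cmod (cnj (\<Sum>m<L. \<Sum>n<N. M m n * b n * cnj (a m)))"
    by (simp only:)
  also have "\<dots> = cmod (\<Sum>m<L. \<Sum>n<N. M m n * b n * cnj (a m))" by (rule complex_mod_cnj)
  also have "\<dots> \<le> K * sqrt (\<Sum>n<N. (cmod (b n))\<^sup>2) * sqrt (\<Sum>m<L. (cmod (a m))\<^sup>2)"
    using assms unfolding KB_def by blast
  finally show "cmod (\<Sum>n<N. \<Sum>m<L. adjk M n m * a m * cnj (b n)) \<le> K * sqrt (\<Sum>m<L. (cmod (a m))\<^sup>2) * sqrt (\<Sum>n<N. (cmod (b n))\<^sup>2)"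
    by (simp add: mult_ac)
qed

lemma sqrt_bound_lemma:
  fixes S c :: real
  assumes "0 \<le> S" "0 \<le> c" "S \<le> c * sqrt S"
  shows "S \<le> c\<^sup>2"
proof (cases "S = 0")
  case True then show ?thesis using assms by simp
next
  case False
  then have p: "sqrt S > 0" using assms by simp
  have "sqrt S * sqrt S \<le> c * sqrt S" using assms by simp
  then have "sqrt S \<le> c" using p by (simp only: mult_le_cancel_right_pos)
  then have "sqrt S ^ 2 \<le> c ^ 2" using p by (intro power_mono) auto
  then show ?thesis using assms by simp
qed

lemma KB_row:
  assumes "KB M K" shows "(\<lambda>m. M n m) \<in> H2" "nsq (\<lambda>m. M n m) \<le> K\<^sup>2"
proof -
  have K0: "K \<ge> 0" using assms by (simp add: KB_def)
  have bnd: "(\<Sum>m<L. (cmod (M n m))\<^sup>2) \<le> K\<^sup>2" for L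
  proof -
    define S where "S = (\<Sum>m<L. (cmod (M n m))\<^sup>2)"
    have S0: "S \<ge> 0" unfolding S_def by (simp add: sum_nonneg)
    have "(\<Sum>i<Suc n. \<Sum>m<L. M i m * cnj (M n m) * cnj (zpow n i)) = (\<Sum>i<Suc n. if i = n then (\<Sum>m<L. M n m * cnj (M n m)) else 0)"
      by (intro sum.cong refl) (auto simp: zpow_def)
    also have "\<dots> = (\<Sum>m<L. M n m * cnj (M n m))" by (simp add: sum.delta)
    also have "\<dots> = complex_of_real S" by (simp only: S_def of_real_sum complex_norm_square)
    finally have eq: "(\<Sum>i<Suc n. \<Sum>m<L. M i m * cnj (M n m) * cnj (zpow n i)) = complex_of_real S" .
    have z: "(\<Sum>i<Suc n. (cmod (zpow n i))\<^sup>2) = 1"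
      by (simp add: zpow_def sum.delta)
    have "cmod (\<Sum>i<Suc n. \<Sum>m<L. M i m * cnj (M n m) * cnj (zpow n i)) \<le> K * sqrt (\<Sum>m<L. (cmod (cnj (M n m)))\<^sup>2) * sqrt (\<Sum>i<Suc n. (cmod (zpow n i))\<^sup>2)"
      by (rule KB_apply[OF assms])
    then have "cmod (complex_of_real S) \<le> K * sqrt S * sqrt 1" by (simp only: eq z complex_mod_cnj S_def[symmetric])
    then have "S \<le> K * sqrt S" using S0 by simp
    then show ?thesis using sqrt_bound_lemma[OF S0 K0] unfolding S_def by simp
  qed
  show r: "(\<lambda>m. M n m) \<in> H2" unfolding H2_iff
    by (rule summableI_nonneg_bounded[where x="K\<^sup>2"]) (use bnd in auto)
  show "nsq (\<lambda>m. M n m) \<le> K\<^sup>2" unfolding nsq_def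
    using r unfolding H2_iff by (rule suminf_le_const) (rule bnd)
qed

lemma KB_row_summable:
  assumes "KB M K" "a \<in> H2" shows "summable (\<lambda>m. M n m * a m)"
  using KB_row(1)[OF assms(1), of n] assms(2) by (intro prod_summable) (auto simp: H2_iff)

lemma KB_kop_bound:
  assumes KB: "KB M K" and a: "a \<in> H2"
  shows "kop M a \<in> H2" "nsq (kop M a) \<le> K\<^sup>2 * nsq a"
proof -
  have K0: "K \<ge> 0" using KB by (simp add: KB_def)
  define c where "c = kop M a"
  have na: "nsq a \<ge> 0" using a by (rule nsq_nonneg)
  have bnd: "(\<Sum>n<N. (cmod (c n))\<^sup>2) \<le> K\<^sup>2 * nsq a" for N
  proof -
    define S where "S = (\<Sum>n<N. (cmod (c n))\<^sup>2)"
    have S0: "S \<ge> 0" unfolding S_def by (simp add: sum_nonneg)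
    define sq where "sq = (\<lambda>L. \<Sum>n<N. \<Sum>m<L. M n m * a m * cnj (c n))"
    have conv: "(\<lambda>L. \<Sum>m<L. M n m * a m) \<longlonglongrightarrow> c n" for n
      unfolding c_def kop_def by (rule summable_LIMSEQ[OF KB_row_summable[OF KB a]])
    have "sq = (\<lambda>L. \<Sum>n<N. (\<Sum>m<L. M n m * a m) * cnj (c n))"
      unfolding sq_def by (simp add: sum_distrib_right)
    moreover have "(\<lambda>L. \<Sum>n<N. (\<Sum>m<L. M n m * a m) * cnj (c n)) \<longlonglongrightarrow> (\<Sum>n<N. c n * cnj (c n))"
      by (intro tendsto_sum tendsto_mult_right conv)
    moreover have "(\<Sum>n<N. c n * cnj (c n)) = complex_of_real S"
      by (simp only: S_def of_real_sum complex_norm_square)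
    ultimately have lim: "sq \<longlonglongrightarrow> complex_of_real S" by simp
    have "cmod (sq L) \<le> K * sqrt (nsq a) * sqrt S" for L
    proof -
      have "cmod (sq L) \<le> K * sqrt (\<Sum>m<L. (cmod (a m))\<^sup>2) * sqrt S"
        unfolding sq_def S_def by (rule KB_apply[OF KB])
      also have "\<dots> \<le> K * sqrt (nsq a) * sqrt S"
      proof -
        have "(\<Sum>m<L. (cmod (a m))\<^sup>2) \<le> nsq a"
          unfolding nsq_def using a unfolding H2_iff by (intro sum_le_suminf) auto
        then show ?thesis using K0 S0 by (intro mult_right_mono mult_left_mono) auto
      qed
      finally show ?thesis .
    qed
    then have "cmod (complex_of_real S) \<le> K * sqrt (nsq a) * sqrt S"
      by (intro LIMSEQ_le_const2[OF tendsto_norm[OF lim]]) auto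
    then have "S \<le> (K * sqrt (nsq a)) * sqrt S" using S0 by simp
    then have "S \<le> (K * sqrt (nsq a))\<^sup>2" using sqrt_bound_lemma[OF S0] K0 na by simp
    then show ?thesis using na unfolding S_def by (simp add: power_mult_distrib)
  qed
  show r: "kop M a \<in> H2" unfolding H2_iff c_def[symmetric]
    by (rule summableI_nonneg_bounded[where x="K\<^sup>2 * nsq a"]) (use bnd in auto)
  have "(\<Sum>n. (cmod (c n))\<^sup>2) \<le> K\<^sup>2 * nsq a"
    using r unfolding H2_iff c_def[symmetric] by (rule suminf_le_const) (rule bnd)
  then show "nsq (kop M a) \<le> K\<^sup>2 * nsq a" unfolding c_def nsq_def[of "kop M a"] .
qed

lemma kop_diff:
  assumes KB: "KB M K" and a: "a \<in> H2" and b: "b \<in> H2"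
  shows "kop M (\<lambda>n. a n - b n) = (\<lambda>n. kop M a n - kop M b n)"
  unfolding kop_def
  by (rule ext) (simp add: right_diff_distrib suminf_diff[OF KB_row_summable[OF KB a] KB_row_summable[OF KB b]])

lemma kop_hnorm:
  assumes KB: "KB M K" and a: "a \<in> H2"
  shows "hnorm (kop M a) \<le> K * hnorm a"
proof -
  have K0: "K \<ge> 0" using KB by (simp add: KB_def)
  have "hnorm (kop M a) = sqrt (nsq (kop M a))" by (rule hnorm_nsq)
  also have "\<dots> \<le> sqrt (K\<^sup>2 * nsq a)" by (rule real_sqrt_le_mono[OF KB_kop_bound(2)[OF KB a]])
  also have "\<dots> = K * hnorm a" using K0 by (simp add: real_sqrt_mult hnorm_nsq)
  finally show ?thesis .
qed

lemma kop_trunc: "kop M (trunc L a) n = (\<Sum>m<L. M n m * a m)"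
  unfolding kop_def trunc_def by (subst suminf_finite[of "{..<L}"]) auto

lemma KB_col: "KB M K \<Longrightarrow> (\<lambda>n. M n m) \<in> H2"
proof -
  assume "KB M K"
  from KB_row(1)[OF KB_adjk[OF this], of m] show ?thesis
    by (simp add: adjk_def H2_iff)
qed

lemma kop_adjoint:
  assumes KB: "KB M K" and a: "a \<in> H2" and b: "b \<in> H2"
  shows "hinner (kop M a) b = hinner a (kop (adjk M) b)"
proof -
  have K0: "K \<ge> 0" using KB by (simp add: KB_def)
  have KBa: "KB (adjk M) K" by (rule KB_adjk[OF KB])
  have kb: "kop (adjk M) b \<in> H2" by (rule KB_kop_bound(1)[OF KBa b])
  have ka: "kop M a \<in> H2" by (rule KB_kop_bound(1)[OF KB a])
  define aL where "aL = (\<lambda>L. trunc L a)"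
  have aLH: "aL L \<in> H2" for L unfolding aL_def by (rule trunc_H2)
  have eqL: "hinner (kop M (aL L)) b = (\<Sum>m<L. a m * cnj (kop (adjk M) b m))" for L
  proof -
    have sm: "summable (\<lambda>n. M n m * a m * cnj (b n))" for m
    proof -
      have "summable (\<lambda>n. M n m * (a m * cnj (b n)))"
        using KB_col[OF KB, of m] H2_scale[OF b, of "a m"]
        by (intro prod_summable) (auto simp: H2_iff norm_mult)
      then show ?thesis by (simp add: mult.assoc)
    qed
    have "hinner (kop M (aL L)) b = (\<Sum>n. \<Sum>m<L. M n m * a m * cnj (b n))"
      unfolding hinner_def aL_def kop_trunc by (simp add: sum_distrib_right)
    also have "\<dots> = (\<Sum>m<L. \<Sum>n. M n m * a m * cnj (b n))"
      by (rule suminf_sum) (rule sm)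
    also have "\<dots> = (\<Sum>m<L. a m * cnj (kop (adjk M) b m))"
    proof (rule sum.cong[OF refl])
      fix m
      have s1: "summable (\<lambda>n. M n m * cnj (b n))"
        using KB_col[OF KB, of m] b by (intro prod_summable) (auto simp: H2_iff)
      have "(\<Sum>n. M n m * a m * cnj (b n)) = a m * (\<Sum>n. M n m * cnj (b n))"
        by (subst suminf_mult[OF s1, symmetric]) (simp add: mult_ac)
      also have "(\<Sum>n. M n m * cnj (b n)) = cnj (\<Sum>n. cnj (M n m) * b n)"
        using suminf_cnj[OF s1] by simp
      finally show "(\<Sum>n. M n m * a m * cnj (b n)) = a m * cnj (kop (adjk M) b m)"
        by (simp add: kop_def adjk_def)
    qed
    finally show ?thesis .
  qed
  have lim1: "(\<lambda>L. \<Sum>m<L. a m * cnj (kop (adjk M) b m)) \<longlonglongrightarrow> hinner a (kop (adjk M) b)"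
    unfolding hinner_def by (rule summable_LIMSEQ[OF hinner_summable[OF a kb]])
  have lim2: "(\<lambda>L. hinner (kop M (aL L)) b) \<longlonglongrightarrow> hinner (kop M a) b"
  proof -
    have d: "hinner (kop M a) b - hinner (kop M (aL L)) b = hinner (kop M (\<lambda>n. a n - aL L n)) b" for L
      using ka KB_kop_bound(1)[OF KB aLH] b
      by (simp add: kop_diff[OF KB a aLH] hinner_diff_left)
    have nb: "cmod (hinner (kop M a) b - hinner (kop M (aL L)) b) \<le> K * sqrt (nsq (\<lambda>n. a n - aL L n)) * hnorm b" for L
    proof -
      have dh: "(\<lambda>n. a n - aL L n) \<in> H2" by (rule H2_diff[OF a aLH])
      have "cmod (hinner (kop M (\<lambda>n. a n - aL L n)) b) \<le> hnorm (kop M (\<lambda>n. a n - aL L n)) * hnorm b"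
        by (rule cauchy_schwarz[OF KB_kop_bound(1)[OF KB dh] b])
      also have "\<dots> \<le> K * hnorm (\<lambda>n. a n - aL L n) * hnorm b"
        by (rule mult_right_mono[OF kop_hnorm[OF KB dh]]) (simp add: hnorm_nsq nsq_nonneg[OF b])
      finally show ?thesis unfolding d hnorm_nsq .
    qed
    have g0: "(\<lambda>L. K * sqrt (nsq (\<lambda>n. a n - aL L n)) * hnorm b) \<longlonglongrightarrow> K * sqrt 0 * hnorm b"
      unfolding aL_def by (intro tendsto_intros tail_tendsto[OF a])
    have "(\<lambda>L. hinner (kop M a) b - hinner (kop M (aL L)) b) \<longlonglongrightarrow> 0"
      by (rule Lim_null_comparison[OF _ g0[simplified]]) (use nb in auto)
    then have "(\<lambda>L. hinner (kop M a) b - (hinner (kop M a) b - hinner (kop M (aL L)) b)) \<longlonglongrightarrow> hinner (kop M a) b - 0"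
      by (intro tendsto_intros)
    then show ?thesis by simp
  qed
  show ?thesis using LIMSEQ_unique[OF lim2[unfolded eqL] lim1] .
qed

lemma conjD:
  assumes "conjugation C"
  shows "\<And>a. a \<in> H2 \<Longrightarrow> C a \<in> H2"
    and "\<And>a b. a \<in> H2 \<Longrightarrow> b \<in> H2 \<Longrightarrow> C (\<lambda>n. a n + b n) = (\<lambda>n. C a n + C b n)"
    and "\<And>a c. a \<in> H2 \<Longrightarrow> C (\<lambda>n. c * a n) = (\<lambda>n. cnj c * C a n)"
    and "\<And>a. a \<in> H2 \<Longrightarrow> C (C a) = a"
    and "\<And>a. a \<in> H2 \<Longrightarrow> hnorm (C a) = hnorm a"
  using assms unfolding conjugation_def by blast+

lemma C_self_inner:
  assumes C: "conjugation C" and z: "z \<in> H2"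
  shows "hinner (C z) (C z) = hinner z z"
proof -
  have "hinner (C z) (C z) = complex_of_real ((hnorm (C z))\<^sup>2)"
    using hinner_self[OF conjD(1)[OF C z]] hnorm_sq[OF conjD(1)[OF C z]] by simp
  also have "\<dots> = complex_of_real ((hnorm z)\<^sup>2)" using conjD(5)[OF C z] by simp
  also have "\<dots> = hinner z z" using hinner_self[OF z] hnorm_sq[OF z] by simp
  finally show ?thesis .
qed

lemma C_inner_Re:
  assumes C: "conjugation C" and x: "x \<in> H2" and y: "y \<in> H2"
  shows "Re (hinner (C x) (C y)) = Re (hinner y x)"
proof -
  have Cx: "C x \<in> H2" and Cy: "C y \<in> H2" using conjD(1)[OF C] x y by auto
  define z where "z = (\<lambda>n. x n + y n)"
  have z: "z \<in> H2" unfolding z_def by (rule H2_add[OF x y])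
  have Cz: "C z = (\<lambda>n. C x n + C y n)" unfolding z_def by (rule conjD(2)[OF C x y])
  have "hinner (C z) (C z) = hinner (C x) (C x) + hinner (C x) (C y) + hinner (C y) (C x) + hinner (C y) (C y)"
    unfolding Cz using Cx Cy H2_add[OF Cx Cy]
    by (simp add: hinner_add_left hinner_add_right)
  moreover have "hinner z z = hinner x x + hinner x y + hinner y x + hinner y y"
    unfolding z_def using x y H2_add[OF x y]
    by (simp add: hinner_add_left hinner_add_right)
  moreover note C_self_inner[OF C z] C_self_inner[OF C x] C_self_inner[OF C y]
  ultimately have "hinner (C x) (C y) + hinner (C y) (C x) = hinner x y + hinner y x"
    by (simp add: algebra_simps)
  moreover have "hinner (C y) (C x) = cnj (hinner (C x) (C y))" by (rule hinner_cnj[OF Cx Cy])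
  moreover have "hinner x y = cnj (hinner y x)" by (rule hinner_cnj[OF y x])
  ultimately have "hinner (C x) (C y) + cnj (hinner (C x) (C y)) = cnj (hinner y x) + hinner y x"
    by simp
  then have "Re (hinner (C x) (C y) + cnj (hinner (C x) (C y))) = Re (cnj (hinner y x) + hinner y x)"
    by simp
  then show ?thesis by simp
qed

lemma C_inner:
  assumes C: "conjugation C" and x: "x \<in> H2" and y: "y \<in> H2"
  shows "hinner (C x) (C y) = hinner y x"
proof (rule complex_eqI)
  show "Re (hinner (C x) (C y)) = Re (hinner y x)" by (rule C_inner_Re[OF C x y])
  have Cx: "C x \<in> H2" and Cy: "C y \<in> H2" using conjD(1)[OF C] x y by auto
  have ix: "(\<lambda>n. \<i> * x n) \<in> H2" by (rule H2_scale[OF x])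
  have "Re (hinner (C (\<lambda>n. \<i> * x n)) (C y)) = Re (hinner y (\<lambda>n. \<i> * x n))"
    by (rule C_inner_Re[OF C ix y])
  moreover have "hinner (C (\<lambda>n. \<i> * x n)) (C y) = - \<i> * hinner (C x) (C y)"
    unfolding conjD(3)[OF C x] using hinner_scale_left[OF Cx Cy, of "cnj \<i>"] by simp
  moreover have "hinner y (\<lambda>n. \<i> * x n) = - \<i> * hinner y x"
    using hinner_scale_right[OF x y, of \<i>] by simp
  ultimately show "Im (hinner (C x) (C y)) = Im (hinner y x)" by simp
qed

lemma onbD:
  assumes "orthonormal_basis f"
  shows "\<And>k. f k \<in> H2" "\<And>i j. hinner (f i) (f j) = (if i = j then 1 else 0)"
    "\<And>a. a \<in> H2 \<Longrightarrow> (\<forall>k. hinner a (f k) = 0) \<Longrightarrow> a = (\<lambda>_. 0)"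
  using assms unfolding orthonormal_basis_def by blast+

lemma comb_H2:
  assumes "\<And>k. f k \<in> H2" "finite F"
  shows "(\<lambda>n. \<Sum>k\<in>F. d k * f k n) \<in> H2"
  using assms(2)
proof (induction F rule: finite_induct)
  case empty
  then show ?case by (simp add: H2_finite_support[of "{}"])
next
  case (insert k F)
  have "(\<lambda>n. d k * f k n + (\<Sum>k\<in>F. d k * f k n)) \<in> H2"
    by (rule H2_add[OF H2_scale[OF assms(1)] insert.IH])
  then show ?case using insert.hyps by simp
qed

lemma comb_inner:
  assumes "\<And>k. f k \<in> H2" "finite F" "z \<in> H2"
  shows "hinner (\<lambda>n. \<Sum>k\<in>F. d k * f k n) z = (\<Sum>k\<in>F. d k * hinner (f k) z)"
proof -
  have "hinner (\<lambda>n. \<Sum>k\<in>F. d k * f k n) z = (\<Sum>n. \<Sum>k\<in>F. d k * (f k n * cnj (z n)))"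
    unfolding hinner_def by (simp add: sum_distrib_right mult.assoc)
  also have "\<dots> = (\<Sum>k\<in>F. \<Sum>n. d k * (f k n * cnj (z n)))"
    by (rule suminf_sum) (intro summable_mult hinner_summable assms)
  also have "\<dots> = (\<Sum>k\<in>F. d k * hinner (f k) z)"
    unfolding hinner_def by (intro sum.cong refl suminf_mult hinner_summable assms)
  finally show ?thesis .
qed

lemma onb_comb_inner_basis:
  assumes "orthonormal_basis f" "finite F"
  shows "hinner (\<lambda>n. \<Sum>k\<in>F. d k * f k n) (f j) = (if j \<in> F then d j else 0)"
  using assms(2) by (simp add: comb_inner[OF onbD(1)[OF assms(1)] assms(2) onbD(1)[OF assms(1)]] onbD(2)[OF assms(1)]
      if_distrib[of "\<lambda>x. _ * x"] sum.delta' cong: if_cong)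

lemma onb_comb_self:
  assumes "orthonormal_basis f" "finite F"
  shows "hinner (\<lambda>n. \<Sum>k\<in>F. d k * f k n) (\<lambda>n. \<Sum>k\<in>F. d k * f k n) = complex_of_real (\<Sum>k\<in>F. (cmod (d k))\<^sup>2)"
proof -
  note fH = onbD(1)[OF assms(1)]
  have g: "(\<lambda>n. \<Sum>k\<in>F. d k * f k n) \<in> H2" by (rule comb_H2[OF fH assms(2)])
  have "hinner (\<lambda>n. \<Sum>k\<in>F. d k * f k n) (\<lambda>n. \<Sum>k\<in>F. d k * f k n)
      = (\<Sum>k\<in>F. d k * hinner (f k) (\<lambda>n. \<Sum>k\<in>F. d k * f k n))"
    by (rule comb_inner[OF fH assms(2) g])
  also have "\<dots> = (\<Sum>k\<in>F. d k * cnj (d k))"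
  proof (rule sum.cong[OF refl])
    fix k assume k: "k \<in> F"
    have "hinner (f k) (\<lambda>n. \<Sum>k\<in>F. d k * f k n) = cnj (hinner (\<lambda>n. \<Sum>k\<in>F. d k * f k n) (f k))"
      by (rule hinner_cnj[OF g fH])
    then show "d k * hinner (f k) (\<lambda>n. \<Sum>k\<in>F. d k * f k n) = d k * cnj (d k)"
      using onb_comb_inner_basis[OF assms, of d k] k by simp
  qed
  also have "\<dots> = complex_of_real (\<Sum>k\<in>F. (cmod (d k))\<^sup>2)"
    by (simp only: of_real_sum complex_norm_square)
  finally show ?thesis .
qed

lemma nsq_of_inner: "a \<in> H2 \<Longrightarrow> nsq a = Re (hinner a a)"
  by (simp add: hinner_self)

lemma bessel_finite:
  assumes onb: "orthonormal_basis f" and x: "x \<in> H2"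
  shows "(\<Sum>k<K. (cmod (hinner x (f k)))\<^sup>2) \<le> nsq x"
proof -
  note fH = onbD(1)[OF onb]
  define c where "c = (\<lambda>k. hinner x (f k))"
  define g where "g = (\<lambda>n. \<Sum>k\<in>{..<K}. c k * f k n)"
  define S where "S = (\<Sum>k<K. (cmod (c k))\<^sup>2)"
  have g: "g \<in> H2" unfolding g_def by (rule comb_H2[OF fH]) simp
  have gx: "hinner g x = complex_of_real S"
  proof -
    have "hinner g x = (\<Sum>k<K. c k * hinner (f k) x)"
      unfolding g_def by (rule comb_inner[OF fH _ x]) simp
    also have "\<dots> = (\<Sum>k<K. c k * cnj (c k))"
      unfolding c_def using hinner_cnj[OF x fH] by simp
    also have "\<dots> = complex_of_real S" unfolding S_def by (simp only: of_real_sum complex_norm_square)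
    finally show ?thesis .
  qed
  have xg: "hinner x g = complex_of_real S" using hinner_cnj[OF g x] gx by simp
  have gg: "hinner g g = complex_of_real S"
    unfolding g_def S_def by (rule onb_comb_self[OF onb]) simp
  have y: "(\<lambda>n. x n - g n) \<in> H2" by (rule H2_diff[OF x g])
  have "hinner (\<lambda>n. x n - g n) (\<lambda>n. x n - g n) = hinner x x - hinner x g - (hinner g x - hinner g g)"
  proof -
    have "hinner (\<lambda>n. x n - g n) (\<lambda>n. x n - g n) = hinner x (\<lambda>n. x n - g n) - hinner g (\<lambda>n. x n - g n)"
      by (rule hinner_diff_left[OF x g y])
    also have "hinner x (\<lambda>n. x n - g n) = hinner x x - hinner x g"
      using hinner_cnj[OF y x] hinner_diff_left[OF x g x] hinner_cnj[OF x x] hinner_cnj[OF g x] by simp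
    also have "hinner g (\<lambda>n. x n - g n) = hinner g x - hinner g g"
      using hinner_cnj[OF y g] hinner_diff_left[OF x g g] hinner_cnj[OF x g] hinner_cnj[OF g g] by simp
    finally show ?thesis .
  qed
  then have "nsq (\<lambda>n. x n - g n) = nsq x - S"
    using nsq_of_inner[OF y] nsq_of_inner[OF x] xg gx gg by simp
  then show ?thesis using nsq_nonneg[OF y] unfolding S_def c_def by simp
qed

lemma bessel_summable:
  assumes onb: "orthonormal_basis f" and x: "x \<in> H2"
  shows "summable (\<lambda>k. (cmod (hinner x (f k)))\<^sup>2)" "(\<Sum>k. (cmod (hinner x (f k)))\<^sup>2) \<le> nsq x"
proof -
  show s: "summable (\<lambda>k. (cmod (hinner x (f k)))\<^sup>2)"
    by (rule summableI_nonneg_bounded[where x="nsq x"]) (auto intro: bessel_finite[OF onb x])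
  show "(\<Sum>k. (cmod (hinner x (f k)))\<^sup>2) \<le> nsq x"
    by (rule suminf_le_const[OF s]) (rule bessel_finite[OF onb x])
qed

lemma coord_summable:
  assumes onb: "orthonormal_basis f"
  shows "summable (\<lambda>k. (cmod (f k n))\<^sup>2)"
proof -
  have "summable (\<lambda>k. (cmod (hinner (zpow n) (f k)))\<^sup>2)"
    by (rule bessel_summable(1)[OF onb zpow_H2])
  then show ?thesis by (simp add: hinner_zpow_left)
qed

lemma tail_block_bound:
  fixes g :: "nat \<Rightarrow> real"
  assumes s: "summable g" and nn: "\<And>k. g k \<ge> 0" and KL: "K \<le> L"
  shows "(\<Sum>k\<in>{K..<L}. g k) \<le> (\<Sum>k. g (k + K))"
proof -
  have "{K..<L} = {0 + K..<(L - K) + K}" using KL by simp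
  then have "(\<Sum>k\<in>{K..<L}. g k) = (\<Sum>i\<in>{0..<L - K}. g (i + K))"
    by (simp only: sum.shift_bounds_nat_ivl)
  also have "\<dots> \<le> (\<Sum>k. g (k + K))"
    by (rule sum_le_suminf) (use s nn in auto)
  finally show ?thesis .
qed

lemma onb_expand:
  assumes onb: "orthonormal_basis f" and x: "x \<in> H2"
  shows "x n = (\<Sum>k. hinner x (f k) * f k n)"
proof -
  note fH = onbD(1)[OF onb]
  define c where "c = (\<lambda>k. hinner x (f k))"
  have sc: "summable (\<lambda>k. (cmod (c k))\<^sup>2)" unfolding c_def by (rule bessel_summable(1)[OF onb x])
  have sy: "summable (\<lambda>k. c k * f k m)" for m
    by (rule prod_summable[OF sc coord_summable[OF onb]])
  define y where "y = (\<lambda>m. \<Sum>k. c k * f k m)"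
  define yK where "yK = (\<lambda>K m. \<Sum>k\<in>{..<K}. c k * f k m)"
  have yKH: "yK K \<in> H2" for K unfolding yK_def by (rule comb_H2[OF fH]) simp
  define t where "t = (\<lambda>K. \<Sum>k. (cmod (c (k + K)))\<^sup>2)"
  have t0: "t \<longlonglongrightarrow> 0" unfolding t_def by (rule suminf_exist_split2[OF sc])
  have tnn: "t K \<ge> 0" for K unfolding t_def using sc summable_iff_shift[of "\<lambda>k. (cmod (c k))\<^sup>2" K] by (intro suminf_nonneg) auto
  have A: "(\<lambda>m. y m - yK K m) \<in> H2 \<and> nsq (\<lambda>m. y m - yK K m) \<le> t K" for K
  proof -
    have blk: "(\<Sum>m<N. (cmod (yK L m - yK K m))\<^sup>2) \<le> t K" if KL: "K \<le> L" for N L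
    proof -
      have d: "(\<lambda>m. yK L m - yK K m) = (\<lambda>m. \<Sum>k\<in>{K..<L}. c k * f k m)"
      proof
        fix m
        have "(\<Sum>k\<in>{0..<K}. c k * f k m) + (\<Sum>k\<in>{K..<L}. c k * f k m) = (\<Sum>k\<in>{0..<L}. c k * f k m)"
          by (rule sum.atLeastLessThan_concat) (use KL in auto)
        then show "yK L m - yK K m = (\<Sum>k\<in>{K..<L}. c k * f k m)"
          unfolding yK_def by (simp add: atLeast0LessThan algebra_simps)
      qed
      have dH: "(\<lambda>m. yK L m - yK K m) \<in> H2" by (rule H2_diff[OF yKH yKH])
      have "(\<Sum>m<N. (cmod (yK L m - yK K m))\<^sup>2) \<le> nsq (\<lambda>m. yK L m - yK K m)"
        unfolding nsq_def using dH unfolding H2_iff by (intro sum_le_suminf) auto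
      also have "\<dots> = (\<Sum>k\<in>{K..<L}. (cmod (c k))\<^sup>2)"
        unfolding d using nsq_of_inner[OF comb_H2[OF fH, of "{K..<L}" c]] onb_comb_self[OF onb, of "{K..<L}" c] by simp
      also have "\<dots> \<le> t K" unfolding t_def by (rule tail_block_bound[OF sc _ KL]) simp
      finally show ?thesis .
    qed
    have fin: "(\<Sum>m<N. (cmod (y m - yK K m))\<^sup>2) \<le> t K" for N
    proof -
      have conv: "(\<lambda>L. yK L m) \<longlonglongrightarrow> y m" for m
        unfolding yK_def y_def by (rule summable_LIMSEQ[OF sy])
      have "(\<lambda>L. \<Sum>m<N. (cmod (yK L m - yK K m))\<^sup>2) \<longlonglongrightarrow> (\<Sum>m<N. (cmod (y m - yK K m))\<^sup>2)"
        by (intro tendsto_sum tendsto_power tendsto_norm tendsto_diff conv tendsto_const)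
      then show ?thesis
        by (rule LIMSEQ_le_const2) (use blk in auto)
    qed
    have H: "(\<lambda>m. y m - yK K m) \<in> H2" unfolding H2_iff
      by (rule summableI_nonneg_bounded[where x="t K"]) (use fin in auto)
    moreover have "nsq (\<lambda>m. y m - yK K m) \<le> t K"
      unfolding nsq_def using H unfolding H2_iff by (rule suminf_le_const) (rule fin)
    ultimately show ?thesis by blast
  qed
  have yH: "y \<in> H2" using conjunct1[OF A[of 0]] by (simp add: yK_def)
  have fnorm: "hnorm (f j) = 1" for j
    using nsq_of_inner[OF fH[of j]] onbD(2)[OF onb, of j j] by (simp add: hnorm_nsq)
  have C: "hinner y (f j) = c j" for j
  proof -
    have "cmod (hinner y (f j) - c j) \<le> sqrt (t K)" if K: "K > j" for K
    proof -
      have "hinner (yK K) (f j) = c j"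
        unfolding yK_def using onb_comb_inner_basis[OF onb, of "{..<K}" c j] K by simp
      then have "hinner y (f j) - c j = hinner (\<lambda>m. y m - yK K m) (f j)"
        using hinner_diff_left[OF yH yKH fH] by simp
      also have "cmod \<dots> \<le> hnorm (\<lambda>m. y m - yK K m) * hnorm (f j)"
        by (rule cauchy_schwarz[OF conjunct1[OF A] fH])
      also have "\<dots> \<le> sqrt (t K)"
        using conjunct2[OF A[of K]] unfolding fnorm by (simp add: hnorm_nsq)
      finally show ?thesis .
    qed
    moreover have "(\<lambda>K. sqrt (t K)) \<longlonglongrightarrow> sqrt 0" by (intro tendsto_intros t0)
    ultimately have "cmod (hinner y (f j) - c j) \<le> 0"
      by (intro LIMSEQ_le_const[where X="\<lambda>K. sqrt (t K)"]) (auto intro!: exI[of _ "Suc j"])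
    then show ?thesis by simp
  qed
  have "(\<lambda>m. x m - y m) = (\<lambda>_. 0)"
  proof (rule onbD(3)[OF onb H2_diff[OF x yH]], intro allI)
    fix k
    show "hinner (\<lambda>m. x m - y m) (f k) = 0"
      using hinner_diff_left[OF x yH fH] C unfolding c_def by simp
  qed
  then have "x n = y n" by (metis eq_iff_diff_eq_0)
  then show ?thesis unfolding y_def c_def .
qed

lemma hadjoint_kop:
  assumes KB: "KB M K" and b: "b \<in> H2"
  shows "hadjoint (kop M) b = kop (adjk M) b"
proof -
  have kb: "kop (adjk M) b \<in> H2" by (rule KB_kop_bound(1)[OF KB_adjk[OF KB] b])
  have "(THE c. c \<in> H2 \<and> (\<forall>a\<in>H2. hinner (kop M a) b = hinner a c)) = kop (adjk M) b"
  proof (rule the_equality)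
    show "kop (adjk M) b \<in> H2 \<and> (\<forall>a\<in>H2. hinner (kop M a) b = hinner a (kop (adjk M) b))"
      using kb kop_adjoint[OF KB _ b] by blast
    fix c assume c: "c \<in> H2 \<and> (\<forall>a\<in>H2. hinner (kop M a) b = hinner a c)"
    show "c = kop (adjk M) b"
    proof
      fix n
      have "hinner (zpow n) c = hinner (zpow n) (kop (adjk M) b)"
        using c kop_adjoint[OF KB zpow_H2 b] zpow_H2 by metis
      then show "c n = kop (adjk M) b n" by (simp add: hinner_zpow_left)
    qed
  qed
  then show ?thesis using b by (simp add: hadjoint_def)
qed

lemma C_zpow_coord:
  assumes C: "conjugation C" and onb: "orthonormal_basis f" and fixf: "\<And>n. C (f n) = f n"
  shows "C (zpow m) n = cnm f n m"
proof -
  note fH = onbD(1)[OF onb]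
  have x: "C (zpow m) \<in> H2" by (rule conjD(1)[OF C zpow_H2])
  have "C (zpow m) n = (\<Sum>k. hinner (C (zpow m)) (f k) * f k n)" by (rule onb_expand[OF onb x])
  also have "\<dots> = (\<Sum>k. f k m * f k n)"
  proof -
    have "hinner (C (zpow m)) (f k) = f k m" for k
      using C_inner[OF C zpow_H2 fH[of k]] fixf[of k] by (simp add: hinner_zpow_right)
    then show ?thesis by simp
  qed
  also have "\<dots> = cnm f n m" unfolding cnm_def by (simp add: hinner_zpow_right mult.commute)
  finally show ?thesis .
qed

lemma cnm_sym: "cnm f n m = cnm f m n"
  unfolding cnm_def by (simp add: mult.commute)

lemma toeplitz_kop: "toeplitz \<phi> = kop (\<lambda>n m. fourier_coeff \<phi> (int n - int m))"
  unfolding toeplitz_def kop_def by simp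

lemma toeplitz_KB:
  assumes "Linf_circle \<phi>" obtains K where "KB (\<lambda>n m. fourier_coeff \<phi> (int n - int m)) K"
proof -
  obtain K where "K \<ge> 0" "\<And>N L a b. cmod (\<Sum>n<N. \<Sum>m<L. fourier_coeff \<phi> (int n - int m) * a m * cnj (b n))
     \<le> K * sqrt (\<Sum>m<L. (cmod (a m))\<^sup>2) * sqrt (\<Sum>n<N. (cmod (b n))\<^sup>2)"
    using phi_form_bound[OF assms] by blast
  then have "KB (\<lambda>n m. fourier_coeff \<phi> (int n - int m)) K" unfolding KB_def by blast
  then show ?thesis using that by blast
qed

lemma rhs_split:
  fixes g :: "nat \<Rightarrow> complex"
  assumes s: "summable (\<lambda>n. cnj (fourier_coeff \<phi> (int n - int j)) * cnm f n k)"
  shows "(\<Sum>n. cnj (fourier_coeff \<phi> (int n - int j)) * cnm f n k)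
       = (\<Sum>n. cnj (fourier_coeff \<phi> (int (n + 1))) * cnm f k (n + 1 + j))
         + (\<Sum>l\<le>j. cnj (fourier_coeff \<phi> (- int l)) * cnm f k (j - l))"
proof -
  define g where "g = (\<lambda>n. cnj (fourier_coeff \<phi> (int n - int j)) * cnm f n k)"
  have "suminf g = (\<Sum>n. g (n + Suc j)) + (\<Sum>i<Suc j. g i)"
    using s unfolding g_def by (rule suminf_split_initial_segment)
  moreover have "(\<lambda>n. g (n + Suc j)) = (\<lambda>n. cnj (fourier_coeff \<phi> (int (n + 1))) * cnm f k (n + 1 + j))"
  proof
    fix n
    have "int (n + Suc j) - int j = int (n + 1)" by simp
    moreover have "n + Suc j = n + 1 + j" by simp
    ultimately show "g (n + Suc j) = cnj (fourier_coeff \<phi> (int (n + 1))) * cnm f k (n + 1 + j)"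
      unfolding g_def by (metis cnm_sym)
  qed
  moreover have "(\<Sum>i<Suc j. g i) = (\<Sum>l\<le>j. cnj (fourier_coeff \<phi> (- int l)) * cnm f k (j - l))"
  proof -
    have "(\<Sum>i<Suc j. g i) = (\<Sum>i\<in>{0..j}. g i)" by (simp add: lessThan_Suc_atMost atLeast0AtMost)
    also have "\<dots> = (\<Sum>i\<in>{0..j}. g (j + 0 - i))" by (rule sum.atLeastAtMost_rev)
    also have "\<dots> = (\<Sum>l\<le>j. cnj (fourier_coeff \<phi> (- int l)) * cnm f k (j - l))"
      unfolding atLeast0AtMost
    proof (rule sum.cong[OF refl])
      fix l assume "l \<in> {..j}"
      then have l: "l \<le> j" by simp
      then have "int (j - l) - int j = - int l" by simp
      then show "g (j + 0 - l) = cnj (fourier_coeff \<phi> (- int l)) * cnm f k (j - l)"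
        unfolding g_def by (simp add: cnm_sym[of f "j - l" k])
    qed
    finally show ?thesis .
  qed
  ultimately show ?thesis unfolding g_def by simp
qed

theorem theorem6p1:
  fixes \<phi> :: "real \<Rightarrow> complex"
    and C :: "(nat \<Rightarrow> complex) \<Rightarrow> (nat \<Rightarrow> complex)"
    and f :: "nat \<Rightarrow> (nat \<Rightarrow> complex)"
  assumes "Linf_circle \<phi>"
    and "conjugation C"
    and "orthonormal_basis f"
    and "\<And>n. C (f n) = f n"
  shows "C_symmetric C (toeplitz \<phi>) \<longleftrightarrow>
    (\<forall>j k. (\<Sum>n. cnj (fourier_coeff \<phi> (int n - int k)) * cnm f n j)
         = (\<Sum>n. cnj (fourier_coeff \<phi> (int (n + 1))) * cnm f k (n + 1 + j))
           + (\<Sum>l\<le>j. cnj (fourier_coeff \<phi> (- int l)) * cnm f k (j - l)))"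
proof -
  note L = assms(1) and C = assms(2) and onb = assms(3) and fixf = assms(4)
  define M where "M = (\<lambda>n m. fourier_coeff \<phi> (int n - int m))"
  obtain K where KB: "KB M K" using toeplitz_KB[OF L] unfolding M_def by blast
  define T where "T = kop M"
  define Ta where "Ta = kop (adjk M)"
  have Teq: "toeplitz \<phi> = T" unfolding T_def M_def by (rule toeplitz_kop)
  have TH: "a \<in> H2 \<Longrightarrow> T a \<in> H2" for a unfolding T_def by (rule KB_kop_bound(1)[OF KB])
  have TaH: "a \<in> H2 \<Longrightarrow> Ta a \<in> H2" for a unfolding Ta_def by (rule KB_kop_bound(1)[OF KB_adjk[OF KB]])
  have adj: "a \<in> H2 \<Longrightarrow> b \<in> H2 \<Longrightarrow> hinner (T a) b = hinner a (Ta b)" for a b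
    unfolding T_def Ta_def by (rule kop_adjoint[OF KB])
  have CH: "a \<in> H2 \<Longrightarrow> C a \<in> H2" for a by (rule conjD(1)[OF C])
  have CC: "a \<in> H2 \<Longrightarrow> C (C a) = a" for a by (rule conjD(4)[OF C])
  have Ci: "x \<in> H2 \<Longrightarrow> y \<in> H2 \<Longrightarrow> hinner (C x) (C y) = hinner y x" for x y by (rule C_inner[OF C])
  have z: "zpow k \<in> H2" for k by (rule zpow_H2)
  have coord: "x k = hinner x (zpow k)" for x k by (simp add: hinner_zpow_right)
  have cnjI: "x \<in> H2 \<Longrightarrow> y \<in> H2 \<Longrightarrow> hinner y x = cnj (hinner x y)" for x y by (rule hinner_cnj)
  have Ta_coord: "Ta (C (zpow j)) k = (\<Sum>n. cnj (fourier_coeff \<phi> (int n - int k)) * cnm f n j)" for j k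
    unfolding Ta_def kop_def adjk_def M_def using C_zpow_coord[OF C onb fixf] by simp
  have cond_iff: "(\<forall>j k. (\<Sum>n. cnj (fourier_coeff \<phi> (int n - int k)) * cnm f n j)
         = (\<Sum>n. cnj (fourier_coeff \<phi> (int (n + 1))) * cnm f k (n + 1 + j))
           + (\<Sum>l\<le>j. cnj (fourier_coeff \<phi> (- int l)) * cnm f k (j - l)))
      \<longleftrightarrow> (\<forall>j k. Ta (C (zpow j)) k = Ta (C (zpow k)) j)"
  proof -
    have "(\<Sum>n. cnj (fourier_coeff \<phi> (int n - int j)) * cnm f n k)
       = (\<Sum>n. cnj (fourier_coeff \<phi> (int (n + 1))) * cnm f k (n + 1 + j))
         + (\<Sum>l\<le>j. cnj (fourier_coeff \<phi> (- int l)) * cnm f k (j - l))" for j k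
    proof (rule rhs_split)
      have "summable (\<lambda>m. adjk M j m * C (zpow k) m)"
        by (rule KB_row_summable[OF KB_adjk[OF KB] CH[OF z]])
      then show "summable (\<lambda>n. cnj (fourier_coeff \<phi> (int n - int j)) * cnm f n k)"
        unfolding adjk_def M_def using C_zpow_coord[OF C onb fixf] by simp
    qed
    then show ?thesis unfolding Ta_coord by simp
  qed
  have Csym_iff: "C_symmetric C (toeplitz \<phi>) \<longleftrightarrow> (\<forall>a\<in>H2. C (Ta (C a)) = T a)"
    unfolding C_symmetric_def Teq T_def Ta_def using hadjoint_kop[OF KB CH] by simp
  show ?thesis unfolding cond_iff Csym_iff
  proof
    assume P: "\<forall>a\<in>H2. C (Ta (C a)) = T a"
    show "\<forall>j k. Ta (C (zpow j)) k = Ta (C (zpow k)) j"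
    proof (intro allI)
      fix j k
      have "Ta (C (zpow j)) k = cnj (hinner (zpow k) (Ta (C (zpow j))))"
        using coord cnjI[OF TaH[OF CH[OF z]] z] by simp
      also have "hinner (zpow k) (Ta (C (zpow j))) = hinner (T (zpow k)) (C (zpow j))"
        using adj[OF z CH[OF z]] by simp
      also have "T (zpow k) = C (Ta (C (zpow k)))" using P z by simp
      also have "hinner (C (Ta (C (zpow k)))) (C (zpow j)) = hinner (zpow j) (Ta (C (zpow k)))"
        by (rule Ci[OF TaH[OF CH[OF z]] z])
      also have "\<dots> = cnj (Ta (C (zpow k)) j)" by (simp add: hinner_zpow_left)
      finally show "Ta (C (zpow j)) k = Ta (C (zpow k)) j" by simp
    qed
  next
    assume Q: "\<forall>j k. Ta (C (zpow j)) k = Ta (C (zpow k)) j"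
    have S1: "C (T (zpow k)) = Ta (C (zpow k))" for k
    proof
      fix j
      have "C (T (zpow k)) j = hinner (C (T (zpow k))) (C (C (zpow j)))"
        using coord CC[OF z] by simp
      also have "\<dots> = hinner (C (zpow j)) (T (zpow k))" by (rule Ci[OF TH[OF z] CH[OF z]])
      also have "\<dots> = cnj (hinner (T (zpow k)) (C (zpow j)))" by (rule cnjI[OF TH[OF z] CH[OF z]])
      also have "hinner (T (zpow k)) (C (zpow j)) = hinner (zpow k) (Ta (C (zpow j)))"
        by (rule adj[OF z CH[OF z]])
      also have "\<dots> = cnj (Ta (C (zpow j)) k)" by (simp add: hinner_zpow_left)
      finally show "C (T (zpow k)) j = Ta (C (zpow k)) j" using Q by simp
    qed
    show "\<forall>a\<in>H2. C (Ta (C a)) = T a"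
    proof
      fix a assume a: "a \<in> H2"
      have S2: "Ta (C a) = C (T a)"
      proof
        fix k
        have "Ta (C a) k = cnj (hinner (zpow k) (Ta (C a)))"
          using coord cnjI[OF TaH[OF CH[OF a]] z] by simp
        also have "hinner (zpow k) (Ta (C a)) = hinner (T (zpow k)) (C a)"
          using adj[OF z CH[OF a]] by simp
        also have "\<dots> = hinner (C (C (T (zpow k)))) (C a)" using CC[OF TH[OF z]] by simp
        also have "\<dots> = hinner a (C (T (zpow k)))" by (rule Ci[OF CH[OF TH[OF z]] a])
        also have "\<dots> = hinner a (Ta (C (zpow k)))" by (simp add: S1)
        also have "\<dots> = hinner (T a) (C (zpow k))" using adj[OF a CH[OF z]] by simp
        also have "cnj \<dots> = hinner (C (zpow k)) (T a)" using cnjI[OF CH[OF z] TH[OF a]] by simp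
        also have "\<dots> = hinner (C (T a)) (C (C (zpow k)))" using Ci[OF TH[OF a] CH[OF z]] by simp
        also have "\<dots> = C (T a) k" using CC[OF z] coord by simp
        finally show "Ta (C a) k = C (T a) k" .
      qed
      show "C (Ta (C a)) = T a" unfolding S2 by (rule CC[OF TH[OF a]])
    qed
  qed
qed


end
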